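(* There exists an imprecise copula $(A,B)$ on $[0,1]^2$ such that there is no copula $C$ with $A\le C\le B$.
   Context: A copula is $C:[0,1]^2\to\mathbb{R}$ that is grounded ($C(x,0)=C(0,y)=0$), has neutral element $1$ ($C(x,1)=x$, $C(1,y)=y$), and satisfies $C(s_1,t_1)+C(s_2,t_2)-C(s_2,t_1)-C(s_1,t_2)\ge0$ for all $s_1\le s_2$, $t_1\le t_2$. An imprecise copula is a pair $(A,B)$ of functions $[0,1]^2\to\mathbb{R}$, both grounded with neutral element $1$, such that for every rectangle with southwest, southeast, northeast, northwest corners $\mathbf{a},\mathbf{b},\mathbf{c},\mathbf{d}$: $A(\mathbf{a})+B(\mathbf{c})-A(\mathbf{b})-A(\mathbf{d})\ge0$, $B(\mathbf{a})+A(\mathbf{c})-A(\mathbf{b})-A(\mathbf{d})\ge0$, $B(\mathbf{a})+B(\mathbf{c})-B(\mathbf{b})-A(\mathbf{d})\ge0$, $B(\mathbf{a})+B(\mathbf{c})-A(\mathbf{b})-B(\mathbf{d})\ge0$. *)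

theory Defs
  imports Complex_Main
begin

text \<open>Functions on the unit square are modelled as real \<Rightarrow> real \<Rightarrow> real;
  all conditions only concern arguments in [0,1].\<close>

definition grounded :: "(real \<Rightarrow> real \<Rightarrow> real) \<Rightarrow> bool" where
  "grounded C \<longleftrightarrow> (\<forall>x\<in>{0..1}. C x 0 = 0 \<and> C 0 x = 0)"

definition neutral_one :: "(real \<Rightarrow> real \<Rightarrow> real) \<Rightarrow> bool" where
  "neutral_one C \<longleftrightarrow> (\<forall>x\<in>{0..1}. C x 1 = x \<and> C 1 x = x)"

definition copula :: "(real \<Rightarrow> real \<Rightarrow> real) \<Rightarrow> bool" where
  "copula C \<longleftrightarrow> grounded C \<and> neutral_one C \<and>
     (\<forall>s1 s2 t1 t2. 0 \<le> s1 \<and> s1 \<le> s2 \<and> s2 \<le> 1 \<and> 0 \<le> t1 \<and> t1 \<le> t2 \<and> t2 \<le> 1 \<longrightarrow>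
        C s1 t1 + C s2 t2 - C s2 t1 - C s1 t2 \<ge> 0)"

text \<open>Rectangle [s1,s2] x [t1,t2]: a = (s1,t1) SW, b = (s2,t1) SE, c = (s2,t2) NE, d = (s1,t2) NW.\<close>

definition imprecise_copula :: "(real \<Rightarrow> real \<Rightarrow> real) \<Rightarrow> (real \<Rightarrow> real \<Rightarrow> real) \<Rightarrow> bool" where
  "imprecise_copula A B \<longleftrightarrow> grounded A \<and> neutral_one A \<and> grounded B \<and> neutral_one B \<and>
     (\<forall>s1 s2 t1 t2. 0 \<le> s1 \<and> s1 \<le> s2 \<and> s2 \<le> 1 \<and> 0 \<le> t1 \<and> t1 \<le> t2 \<and> t2 \<le> 1 \<longrightarrow>
        A s1 t1 + B s2 t2 - A s2 t1 - A s1 t2 \<ge> 0 \<and>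
        B s1 t1 + A s2 t2 - A s2 t1 - A s1 t2 \<ge> 0 \<and>
        B s1 t1 + B s2 t2 - B s2 t1 - A s1 t2 \<ge> 0 \<and>
        B s1 t1 + B s2 t2 - A s2 t1 - B s1 t2 \<ge> 0)"

end

theory Submission
  imports Defs
begin

definition xsl :: "int list" where "xsl = [0,40,42,44,46,48,50,100]"
definition xg :: "nat \<Rightarrow> real" where "xg k = real_of_int (xsl ! k) / 100"

definition TA :: "int list list" where "TA = [[0, 0, 0, 0, 0, 0, 0, 0], [0, 0, 1, 2, 3, 3, 4, 40], [0, 1, 2, 2, 3, 3, 4, 42], [0, 1, 2, 4, 4, 4, 5, 44], [0, 2, 2, 4, 5, 5, 5, 46], [0, 3, 3, 5, 5, 7, 7, 48], [0, 4, 4, 6, 6, 7, 7, 50], [0, 40, 42, 44, 46, 48, 50, 100]]"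
definition TB :: "int list list" where "TB = [[0, 0, 0, 0, 0, 0, 0, 0], [0, 1, 2, 3, 4, 4, 5, 40], [0, 2, 2, 3, 4, 4, 5, 42], [0, 2, 2, 4, 5, 5, 6, 44], [0, 3, 3, 5, 5, 5, 6, 46], [0, 4, 4, 6, 6, 7, 8, 48], [0, 5, 5, 7, 7, 8, 8, 50], [0, 40, 42, 44, 46, 48, 50, 100]]"
definition ta :: "nat \<Rightarrow> nat \<Rightarrow> int" where "ta k l = TA ! k ! l"
definition tb :: "nat \<Rightarrow> nat \<Rightarrow> int" where "tb k l = TB ! k ! l"

lemma upt_all: "list_all P [0..<n] \<longleftrightarrow> (\<forall>k<n. P k)"
  by (auto simp: list_all_iff)

lemma xsl_step_l: "list_all (\<lambda>k. xsl ! k < xsl ! Suc k) [0..<7]" by code_simp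

lemma xg_step: "k < 7 \<Longrightarrow> xg k < xg (Suc k)"
  using xsl_step_l by (auto simp: upt_all xg_def)

lemma xg_mono: "k < k' \<Longrightarrow> k' \<le> 7 \<Longrightarrow> xg k < xg k'"
proof (induction k' arbitrary: k)
  case 0 then show ?case by simp
next
  case (Suc k')
  show ?case
  proof (cases "k = k'")
    case True then show ?thesis using xg_step Suc.prems by auto
  next
    case False
    then have "xg k < xg k'" using Suc by auto
    also have "xg k' < xg (Suc k')" using xg_step Suc.prems by auto
    finally show ?thesis .
  qed
qed

lemma xg_le_iff: "k \<le> 7 \<Longrightarrow> k' \<le> 7 \<Longrightarrow> xg k \<le> xg k' \<longleftrightarrow> k \<le> k'"
  by (metis le_less linorder_not_le xg_mono)

lemma xg0: "xg 0 = 0" by (simp add: xg_def xsl_def)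
lemma xg7: "xg 7 = 1" by (simp add: xg_def xsl_def)

lemma xg_range: "k \<le> 7 \<Longrightarrow> 0 \<le> xg k \<and> xg k \<le> 1"
  using xg_le_iff[of 0 k] xg_le_iff[of k 7] xg0 xg7 by auto

definition L :: "nat \<Rightarrow> real \<Rightarrow> real" where
  "L i s = max 0 (min 1 ((s - xg i) / (xg (Suc i) - xg i)))"

lemma L_grid: assumes "i < 7" "k \<le> 7" shows "L i (xg k) = (if i < k then 1 else 0)"
proof -
  have w: "xg i < xg (Suc i)" using xg_step assms by auto
  show ?thesis
  proof (cases "i < k")
    case True
    then have "xg (Suc i) \<le> xg k" using xg_le_iff[of "Suc i" k] assms by auto
    then have "1 \<le> (xg k - xg i) / (xg (Suc i) - xg i)" using w by (simp add: divide_simps)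
    then show ?thesis using True by (simp add: L_def)
  next
    case False
    then have "xg k \<le> xg i" using xg_le_iff[of k i] assms by auto
    then have "(xg k - xg i) / (xg (Suc i) - xg i) \<le> 0" using w by (simp add: divide_simps)
    then show ?thesis using False by (simp add: L_def)
  qed
qed

lemma L0: "i < 7 \<Longrightarrow> L i 0 = 0" using L_grid[of i 0] xg0 by simp
lemma L1: "i < 7 \<Longrightarrow> L i 1 = 1" using L_grid[of i 7] xg7 by simp

definition mi :: "(nat \<Rightarrow> nat \<Rightarrow> int) \<Rightarrow> nat \<Rightarrow> nat \<Rightarrow> int" where
  "mi T i j = T (Suc i) (Suc j) - T (Suc i) j - T i (Suc j) + T i j"

definition bil :: "(nat \<Rightarrow> nat \<Rightarrow> int) \<Rightarrow> real \<Rightarrow> real \<Rightarrow> real" where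
  "bil T s t = (\<Sum>i<7. \<Sum>j<7. real_of_int (mi T i j) / 100 * (L i s * L j t))"

lemma sum_ind: "(k::nat) \<le> n \<Longrightarrow> (\<Sum>i<n. if i < k then f i else 0) = (\<Sum>i<k. f i)"
proof -
  assume "k \<le> n"
  have "sum f ({..<n} \<inter> {i. i < k}) = (\<Sum>i<n. if i \<in> {i. i < k} then f i else 0)"
    by (rule sum.inter_restrict) simp
  then have "(\<Sum>i<n. if i < k then f i else 0) = sum f ({..<n} \<inter> {i. i < k})"
    by simp
  also have "{..<n} \<inter> {i. i < k} = {..<k}" using \<open>k \<le> n\<close> by auto
  finally show ?thesis .
qed

lemma mi_tele: "(\<Sum>i<k. \<Sum>j<l. mi T i j) = T k l - T k 0 - T 0 l + T 0 0"
proof -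
  have inner: "\<And>i. (\<Sum>j<l. mi T i j) = (T (Suc i) l - T i l) - (T (Suc i) 0 - T i 0)"
  proof -
    fix i
    have "(\<Sum>j<l. mi T i j) = (\<Sum>j<l. (\<lambda>j. T (Suc i) j - T i j) (Suc j) - (\<lambda>j. T (Suc i) j - T i j) j)"
      by (simp add: mi_def algebra_simps)
    also have "\<dots> = (T (Suc i) l - T i l) - (T (Suc i) 0 - T i 0)"
      by (rule sum_lessThan_telescope)
    finally show "(\<Sum>j<l. mi T i j) = (T (Suc i) l - T i l) - (T (Suc i) 0 - T i 0)" .
  qed
  have "(\<Sum>i<k. \<Sum>j<l. mi T i j) = (\<Sum>i<k. (\<lambda>i. T i l - T i 0) (Suc i) - (\<lambda>i. T i l - T i 0) i)"
    by (rule sum.cong[OF refl]) (simp add: inner algebra_simps)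
  also have "\<dots> = T k l - T k 0 - T 0 l + T 0 0"
    by (subst sum_lessThan_telescope) simp
  finally show ?thesis .
qed

lemma bil_grid: assumes "k \<le> 7" "l \<le> 7"
  shows "bil T (xg k) (xg l) = real_of_int (T k l - T k 0 - T 0 l + T 0 0) / 100"
proof -
  have "bil T (xg k) (xg l) = (\<Sum>i<7. \<Sum>j<7. real_of_int (mi T i j) / 100 * ((if i < k then 1 else 0) * (if j < l then 1 else 0)))"
    unfolding bil_def using assms by (simp add: L_grid)
  also have "\<dots> = (\<Sum>i<7. if i < k then (\<Sum>j<7. if j < l then real_of_int (mi T i j) / 100 else 0) else 0)"
    by (rule sum.cong) (auto intro!: sum.cong)
  also have "\<dots> = (\<Sum>i<k. \<Sum>j<l. real_of_int (mi T i j) / 100)"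
    using assms by (simp add: sum_ind)
  also have "\<dots> = real_of_int (\<Sum>i<k. \<Sum>j<l. mi T i j) / 100"
    by (simp add: sum_divide_distrib)
  finally show ?thesis by (simp add: mi_tele)
qed


lemma mi_row: "(\<Sum>j<l. mi T i j) = (T (Suc i) l - T i l) - (T (Suc i) 0 - T i 0)"
proof -
  have "(\<Sum>j<l. mi T i j) = (\<Sum>j<l. (\<lambda>j. T (Suc i) j - T i j) (Suc j) - (\<lambda>j. T (Suc i) j - T i j) j)"
    by (simp add: mi_def algebra_simps)
  also have "\<dots> = (T (Suc i) l - T i l) - (T (Suc i) 0 - T i 0)"
    by (rule sum_lessThan_telescope)
  finally show ?thesis .
qed

lemma mi_col: "(\<Sum>i<k. mi T i j) = (T k (Suc j) - T k j) - (T 0 (Suc j) - T 0 j)"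
proof -
  have "(\<Sum>i<k. mi T i j) = (\<Sum>i<k. (\<lambda>i. T i (Suc j) - T i j) (Suc i) - (\<lambda>i. T i (Suc j) - T i j) i)"
    by (simp add: mi_def algebra_simps)
  also have "\<dots> = (T k (Suc j) - T k j) - (T 0 (Suc j) - T 0 j)"
    by (rule sum_lessThan_telescope)
  finally show ?thesis .
qed

lemma tab_props: "list_all (\<lambda>k. ta k 0 = 0 \<and> ta 0 k = 0 \<and> ta k 7 = xsl ! k \<and> ta 7 k = xsl ! k \<and>
   tb k 0 = 0 \<and> tb 0 k = 0 \<and> tb k 7 = xsl ! k \<and> tb 7 k = xsl ! k) [0..<8]"
  by code_simp

lemma tab_gap: "list_all (\<lambda>k. list_all (\<lambda>l. ta k l \<le> tb k l) [0..<8]) [0..<8]"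
  by code_simp

definition goodT :: "(nat \<Rightarrow> nat \<Rightarrow> int) \<Rightarrow> bool" where
  "goodT T \<longleftrightarrow> (\<forall>k\<le>7. T k 0 = 0 \<and> T 0 k = 0 \<and> T k 7 = xsl ! k \<and> T 7 k = xsl ! k)"

lemma goodT_ta: "goodT ta" and goodT_tb: "goodT tb"
  using tab_props unfolding goodT_def upt_all by (auto simp: less_Suc_eq_le)

lemma w_pos: "i < 7 \<Longrightarrow> 0 < xg (Suc i) - xg i" using xg_step by auto

lemma wL: assumes "i < 7" shows "(xg (Suc i) - xg i) * L i s = max 0 (min (xg (Suc i) - xg i) (s - xg i))"
proof -
  define w where "w = xg (Suc i) - xg i"
  have w: "0 < w" using w_pos assms w_def by auto
  have "w * max 0 (min 1 ((s - xg i) / w)) = max 0 (min w (s - xg i))"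
  proof (cases "(s - xg i) / w \<le> 0")
    case True
    then have "s - xg i \<le> 0" using w by (simp add: divide_simps)
    then show ?thesis using True w by (simp add: max_def min_def)
  next
    case False
    then have s0: "0 < s - xg i" using w by (simp add: divide_simps)
    show ?thesis
    proof (cases "1 \<le> (s - xg i) / w")
      case True
      then have "w \<le> s - xg i" using w by (simp add: divide_simps)
      then show ?thesis using True w s0 by (simp add: max_def min_def)
    next
      case False
      then have "s - xg i < w" using w by (simp add: divide_simps)
      then show ?thesis using False w s0 by (simp add: max_def min_def)
    qed
  qed
  then show ?thesis unfolding L_def w_def .
qed

lemma L_tele: "n \<le> 7 \<Longrightarrow> (\<Sum>i<n. (xg (Suc i) - xg i) * L i s) = max 0 (min (xg n) s)"
proof (induction n)
  case 0 then show ?case by (simp add: xg0)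
next
  case (Suc n)
  then have IH: "(\<Sum>i<n. (xg (Suc i) - xg i) * L i s) = max 0 (min (xg n) s)" by simp
  have "0 \<le> xg n" using xg_range Suc.prems by auto
  moreover have "xg n < xg (Suc n)" using xg_step Suc.prems by auto
  ultimately show ?case using IH wL[of n s] Suc.prems by (simp add: max_def min_def)
qed

lemma bil_s0: "bil T s 0 = 0"
  unfolding bil_def by (auto intro!: sum.neutral simp: L0)

lemma bil_0t: "bil T 0 t = 0"
  unfolding bil_def by (auto intro!: sum.neutral simp: L0)

lemma bil_s1: assumes "goodT T" "0 \<le> s" "s \<le> 1" shows "bil T s 1 = s"
proof -
  have "bil T s 1 = (\<Sum>i<7. (\<Sum>j<7. real_of_int (mi T i j) / 100) * L i s)"
    unfolding bil_def by (auto intro!: sum.cong simp: L1 sum_distrib_right)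
  also have "\<dots> = (\<Sum>i<7. (xg (Suc i) - xg i) * L i s)"
  proof (rule sum.cong[OF refl])
    fix i assume "i \<in> {..<7::nat}"
    then have "i < 7" by simp
    have "(\<Sum>j<7. real_of_int (mi T i j) / 100) = real_of_int (\<Sum>j<7. mi T i j) / 100"
      by (simp add: sum_divide_distrib)
    also have "\<dots> = xg (Suc i) - xg i"
      using assms(1) \<open>i < 7\<close> unfolding mi_row goodT_def xg_def by (simp add: diff_divide_distrib)
    finally show "(\<Sum>j<7. real_of_int (mi T i j) / 100) * L i s = (xg (Suc i) - xg i) * L i s" by simp
  qed
  also have "\<dots> = max 0 (min (xg 7) s)" by (rule L_tele) simp
  finally show ?thesis using assms xg7 by simp
qed

lemma bil_1t: assumes "goodT T" "0 \<le> t" "t \<le> 1" shows "bil T 1 t = t"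
proof -
  have "bil T 1 t = (\<Sum>j<7. (\<Sum>i<7. real_of_int (mi T i j) / 100) * L j t)"
    unfolding bil_def by (subst sum.swap) (auto intro!: sum.cong simp: L1 sum_distrib_right)
  also have "\<dots> = (\<Sum>j<7. (xg (Suc j) - xg j) * L j t)"
  proof (rule sum.cong[OF refl])
    fix j assume "j \<in> {..<7::nat}"
    then have "j < 7" by simp
    have "(\<Sum>i<7. real_of_int (mi T i j) / 100) = real_of_int (\<Sum>i<7. mi T i j) / 100"
      by (simp add: sum_divide_distrib)
    also have "\<dots> = xg (Suc j) - xg j"
      using assms(1) \<open>j < 7\<close> unfolding mi_col goodT_def xg_def by (simp add: diff_divide_distrib)
    finally show "(\<Sum>i<7. real_of_int (mi T i j) / 100) * L j t = (xg (Suc j) - xg j) * L j t" by simp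
  qed
  also have "\<dots> = max 0 (min (xg 7) t)" by (rule L_tele) simp
  finally show ?thesis using assms xg7 by simp
qed


definition pl :: "(real \<Rightarrow> real) \<Rightarrow> bool" where
  "pl f \<longleftrightarrow> (\<forall>a b s. a < b \<longrightarrow> (\<forall>k\<le>7. \<not> (a < xg k \<and> xg k < b)) \<longrightarrow> a \<le> s \<longrightarrow> s \<le> b \<longrightarrow>
      f s * (b - a) = f a * (b - s) + f b * (s - a))"

lemma pl_const: "pl (\<lambda>s. c)"
  unfolding pl_def by (auto simp: algebra_simps)

lemma pl_add: assumes "pl f" "pl g" shows "pl (\<lambda>s. f s + g s)"
  unfolding pl_def
proof (intro allI impI)
  fix a b s assume h: "a < b" "\<forall>k\<le>7. \<not> (a < xg k \<and> xg k < b)" "a \<le> s" "s \<le> b"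
  have e1: "f s * (b - a) = f a * (b - s) + f b * (s - a)" using assms(1) h unfolding pl_def by blast
  have e2: "g s * (b - a) = g a * (b - s) + g b * (s - a)" using assms(2) h unfolding pl_def by blast
  show "(f s + g s) * (b - a) = (f a + g a) * (b - s) + (f b + g b) * (s - a)"
    using e1 e2 by (simp only: distrib_right)
qed

lemma pl_diff: assumes "pl f" "pl g" shows "pl (\<lambda>s. f s - g s)"
  unfolding pl_def
proof (intro allI impI)
  fix a b s assume h: "a < b" "\<forall>k\<le>7. \<not> (a < xg k \<and> xg k < b)" "a \<le> s" "s \<le> b"
  have e1: "f s * (b - a) = f a * (b - s) + f b * (s - a)" using assms(1) h unfolding pl_def by blast
  have e2: "g s * (b - a) = g a * (b - s) + g b * (s - a)" using assms(2) h unfolding pl_def by blast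
  show "(f s - g s) * (b - a) = (f a - g a) * (b - s) + (f b - g b) * (s - a)"
    using e1 e2 by (simp only: left_diff_distrib)
qed

lemma pl_cmult: assumes "pl f" shows "pl (\<lambda>s. c * f s)"
  unfolding pl_def
proof (intro allI impI)
  fix a b s assume h: "a < b" "\<forall>k\<le>7. \<not> (a < xg k \<and> xg k < b)" "a \<le> s" "s \<le> b"
  have e1: "f s * (b - a) = f a * (b - s) + f b * (s - a)" using assms(1) h unfolding pl_def by blast
  have "(c * f s) * (b - a) = c * (f s * (b - a))" by simp
  also have "\<dots> = c * (f a * (b - s) + f b * (s - a))" using e1 by simp
  also have "\<dots> = (c * f a) * (b - s) + (c * f b) * (s - a)" by (simp add: algebra_simps)
  finally show "(c * f s) * (b - a) = (c * f a) * (b - s) + (c * f b) * (s - a)" .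
qed

lemma pl_sum: "finite I \<Longrightarrow> (\<And>i. i \<in> I \<Longrightarrow> pl (f i)) \<Longrightarrow> pl (\<lambda>s. \<Sum>i\<in>I. f i s)"
proof (induction I rule: finite_induct)
  case empty then show ?case using pl_const[of 0] by simp
next
  case (insert x F)
  then show ?case using pl_add[of "f x" "\<lambda>s. \<Sum>i\<in>F. f i s"] by simp
qed

lemma pl_L: assumes "i < 7" shows "pl (L i)"
  unfolding pl_def
proof (intro allI impI)
  fix a b s assume ab: "a < b" and ng: "\<forall>k\<le>7. \<not> (a < xg k \<and> xg k < b)" and as: "a \<le> s" and sb: "s \<le> b"
  have w: "xg i < xg (Suc i)" using xg_step assms by auto
  define w where "w = xg (Suc i) - xg i"
  have wp: "0 < w" using w w_def by simp
  have ni: "\<not> (a < xg i \<and> xg i < b)" using ng assms by auto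
  have nsi: "\<not> (a < xg (Suc i) \<and> xg (Suc i) < b)" using ng assms by auto
  consider "b \<le> xg i" | "xg (Suc i) \<le> a" | "xg i \<le> a \<and> b \<le> xg (Suc i)"
    using ni nsi ab by linarith
  then show "L i s * (b - a) = L i a * (b - s) + L i b * (s - a)"
  proof cases
    case 1
    then have "\<And>x. x \<le> b \<Longrightarrow> L i x = 0"
      unfolding L_def using wp w_def by (auto simp: divide_simps max_def min_def)
    then show ?thesis using sb ab by simp
  next
    case 2
    then have "\<And>x. a \<le> x \<Longrightarrow> L i x = 1"
      unfolding L_def using wp w_def by (auto simp: divide_simps max_def min_def)
    then show ?thesis using as ab by (simp add: algebra_simps)
  next
    case 3
    then have "\<And>x. a \<le> x \<Longrightarrow> x \<le> b \<Longrightarrow> L i x = (x - xg i) / w"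
      unfolding L_def using wp w_def by (auto simp: divide_simps max_def min_def)
    then have eqs: "L i s = (s - xg i) / w" "L i a = (a - xg i) / w" "L i b = (b - xg i) / w"
      using as sb ab by auto
    have "(s - xg i)*(b-a) = (a - xg i)*(b-s) + (b - xg i)*(s-a)" by (simp add: algebra_simps)
    then have "(s - xg i)/w*(b-a) = (a - xg i)/w*(b-s) + (b - xg i)/w*(s-a)"
      using wp by (simp add: divide_simps)
    then show ?thesis unfolding eqs .
  qed
qed

lemma pl_bil_s: "pl (\<lambda>s. bil T s t)"
  unfolding bil_def
proof (intro pl_sum)
  fix i j assume "i \<in> {..<7::nat}" "j \<in> {..<7::nat}"
  have "(\<lambda>s. real_of_int (mi T i j) / 100 * (L i s * L j t)) = (\<lambda>s. (real_of_int (mi T i j) / 100 * L j t) * L i s)"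
    by (auto simp: algebra_simps)
  moreover have "pl (\<lambda>s. (real_of_int (mi T i j) / 100 * L j t) * L i s)"
    by (rule pl_cmult[OF pl_L]) (use \<open>i \<in> _\<close> in simp)
  ultimately show "pl (\<lambda>s. real_of_int (mi T i j) / 100 * (L i s * L j t))" by metis
qed auto

lemma pl_bil_t: "pl (\<lambda>t. bil T s t)"
  unfolding bil_def
proof (intro pl_sum)
  fix i j assume "i \<in> {..<7::nat}" "j \<in> {..<7::nat}"
  have "(\<lambda>t. real_of_int (mi T i j) / 100 * (L i s * L j t)) = (\<lambda>t. (real_of_int (mi T i j) / 100 * L i s) * L j t)"
    by (auto simp: algebra_simps)
  moreover have "pl (\<lambda>t. (real_of_int (mi T i j) / 100 * L i s) * L j t)"
    by (rule pl_cmult[OF pl_L]) (use \<open>j \<in> _\<close> in simp)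
  ultimately show "pl (\<lambda>t. real_of_int (mi T i j) / 100 * (L i s * L j t))" by metis
qed auto

lemma pl_nonneg:
  assumes f: "pl f" and lohi: "lo \<le> hi" and flo: "0 \<le> f lo" and fhi: "0 \<le> f hi"
    and fg: "\<And>k. k \<le> 7 \<Longrightarrow> lo \<le> xg k \<Longrightarrow> xg k \<le> hi \<Longrightarrow> 0 \<le> f (xg k)"
    and s: "lo \<le> s" "s \<le> hi"
  shows "0 \<le> f s"
proof -
  define G1 where "G1 = insert lo (xg ` {k. k \<le> 7 \<and> lo \<le> xg k \<and> xg k \<le> s})"
  define G2 where "G2 = insert hi (xg ` {k. k \<le> 7 \<and> s \<le> xg k \<and> xg k \<le> hi})"
  have fin1: "finite G1" and fin2: "finite G2" unfolding G1_def G2_def by auto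
  define a where "a = Max G1"
  define b where "b = Min G2"
  have aG: "a \<in> G1" unfolding a_def by (rule Max_in[OF fin1]) (simp add: G1_def)
  have bG: "b \<in> G2" unfolding b_def by (rule Min_in[OF fin2]) (simp add: G2_def)
  have a_le: "\<And>x. x \<in> G1 \<Longrightarrow> x \<le> a" unfolding a_def using fin1 by auto
  have b_ge: "\<And>x. x \<in> G2 \<Longrightarrow> b \<le> x" unfolding b_def using fin2 by auto
  have as: "a \<le> s" using aG s unfolding G1_def by auto
  have sb: "s \<le> b" using bG s unfolding G2_def by auto
  have fa: "0 \<le> f a" using aG flo fg s unfolding G1_def by auto
  have fb: "0 \<le> f b" using bG fhi fg s unfolding G2_def by auto
  have alo: "lo \<le> a" using a_le unfolding G1_def by auto
  have bhi: "b \<le> hi" using b_ge unfolding G2_def by auto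
  show ?thesis
  proof (cases "a < b")
    case False
    then have "s = a" using as sb by linarith
    then show ?thesis using fa by simp
  next
    case True
    have ng: "\<forall>k\<le>7. \<not> (a < xg k \<and> xg k < b)"
    proof (intro allI impI notI)
      fix k assume k: "k \<le> 7" and ak: "a < xg k \<and> xg k < b"
      show False
      proof (cases "xg k \<le> s")
        case True
        then have "xg k \<in> G1" using k ak alo unfolding G1_def by auto
        then show False using a_le ak by force
      next
        case False
        then have "xg k \<in> G2" using k ak bhi unfolding G2_def by auto
        then show False using b_ge ak by force
      qed
    qed
    have "f s * (b - a) = f a * (b - s) + f b * (s - a)"
      using f True ng as sb unfolding pl_def by blast
    moreover have "0 \<le> f a * (b - s) + f b * (s - a)" using fa fb as sb by simp
    ultimately have "0 \<le> f s * (b - a)" by simp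
    then show ?thesis using True by (simp add: zero_le_mult_iff)
  qed
qed


lemma bil_grid_good: "goodT T \<Longrightarrow> k \<le> 7 \<Longrightarrow> l \<le> 7 \<Longrightarrow> bil T (xg k) (xg l) = real_of_int (T k l) / 100"
  by (simp add: bil_grid goodT_def)

lemma reduce4:
  fixes E :: "real \<Rightarrow> real \<Rightarrow> real \<Rightarrow> real \<Rightarrow> real"
  assumes p1: "\<And>s2 t1 t2. pl (\<lambda>s. E s s2 t1 t2)" and p2: "\<And>s1 t1 t2. pl (\<lambda>s. E s1 s t1 t2)"
    and p3: "\<And>s1 s2 t2. pl (\<lambda>t. E s1 s2 t t2)" and p4: "\<And>s1 s2 t1. pl (\<lambda>t. E s1 s2 t1 t)"
    and ds: "\<And>s t1 t2. 0 \<le> s \<Longrightarrow> s \<le> 1 \<Longrightarrow> 0 \<le> t1 \<Longrightarrow> t1 \<le> t2 \<Longrightarrow> t2 \<le> 1 \<Longrightarrow> 0 \<le> E s s t1 t2"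
    and dt: "\<And>s1 s2 t. 0 \<le> s1 \<Longrightarrow> s1 \<le> s2 \<Longrightarrow> s2 \<le> 1 \<Longrightarrow> 0 \<le> t \<Longrightarrow> t \<le> 1 \<Longrightarrow> 0 \<le> E s1 s2 t t"
    and gr: "\<And>k1 k2 l1 l2. k1 \<le> k2 \<Longrightarrow> k2 \<le> 7 \<Longrightarrow> l1 \<le> l2 \<Longrightarrow> l2 \<le> 7 \<Longrightarrow> 0 \<le> E (xg k1) (xg k2) (xg l1) (xg l2)"
  shows "0 \<le> s1 \<Longrightarrow> s1 \<le> s2 \<Longrightarrow> s2 \<le> 1 \<Longrightarrow> 0 \<le> t1 \<Longrightarrow> t1 \<le> t2 \<Longrightarrow> t2 \<le> 1 \<Longrightarrow> 0 \<le> E s1 s2 t1 t2"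
proof -
  have stA: "0 \<le> E s1 (xg k2) (xg l1) (xg l2)"
    if "k2 \<le> 7" "l1 \<le> l2" "l2 \<le> 7" "0 \<le> s1" "s1 \<le> xg k2" for s1 k2 l1 l2
  proof (rule pl_nonneg[where lo = "xg 0" and hi = "xg k2", OF p1])
    show "xg 0 \<le> xg k2" using xg_le_iff that by auto
    show "0 \<le> E (xg 0) (xg k2) (xg l1) (xg l2)" using gr that by auto
    show "0 \<le> E (xg k2) (xg k2) (xg l1) (xg l2)" using gr that by auto
    show "0 \<le> E (xg k) (xg k2) (xg l1) (xg l2)" if "k \<le> 7" "xg 0 \<le> xg k" "xg k \<le> xg k2" for k
      using gr that \<open>k2 \<le> 7\<close> \<open>l1 \<le> l2\<close> \<open>l2 \<le> 7\<close> xg_le_iff by auto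
    show "xg 0 \<le> s1" "s1 \<le> xg k2" using that xg0 by auto
  qed
  have stB: "0 \<le> E s1 s2 (xg l1) (xg l2)"
    if "l1 \<le> l2" "l2 \<le> 7" "0 \<le> s1" "s1 \<le> s2" "s2 \<le> 1" for s1 s2 l1 l2
  proof (rule pl_nonneg[where lo = s1 and hi = 1, OF p2])
    show "s1 \<le> 1" using that by auto
    show "0 \<le> E s1 s1 (xg l1) (xg l2)" using ds that xg_range xg_le_iff by auto
    show "0 \<le> E s1 1 (xg l1) (xg l2)" using stA[of 7 l1 l2 s1] that xg7 by auto
    show "0 \<le> E s1 (xg k) (xg l1) (xg l2)" if "k \<le> 7" "s1 \<le> xg k" "xg k \<le> 1" for k
      using stA that \<open>l1 \<le> l2\<close> \<open>l2 \<le> 7\<close> \<open>0 \<le> s1\<close> by auto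
    show "s1 \<le> s2" "s2 \<le> 1" using that by auto
  qed
  have stC: "0 \<le> E s1 s2 t1 (xg l2)"
    if "l2 \<le> 7" "0 \<le> s1" "s1 \<le> s2" "s2 \<le> 1" "0 \<le> t1" "t1 \<le> xg l2" for s1 s2 t1 l2
  proof (rule pl_nonneg[where lo = "xg 0" and hi = "xg l2", OF p3])
    show "xg 0 \<le> xg l2" using xg_le_iff that by auto
    show "0 \<le> E s1 s2 (xg 0) (xg l2)" using stB that by auto
    show "0 \<le> E s1 s2 (xg l2) (xg l2)" using stB that by auto
    show "0 \<le> E s1 s2 (xg k) (xg l2)" if "k \<le> 7" "xg 0 \<le> xg k" "xg k \<le> xg l2" for k
      using stB that \<open>l2 \<le> 7\<close> \<open>0 \<le> s1\<close> \<open>s1 \<le> s2\<close> \<open>s2 \<le> 1\<close> xg_le_iff by auto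
    show "xg 0 \<le> t1" "t1 \<le> xg l2" using that xg0 by auto
  qed
  show "0 \<le> s1 \<Longrightarrow> s1 \<le> s2 \<Longrightarrow> s2 \<le> 1 \<Longrightarrow> 0 \<le> t1 \<Longrightarrow> t1 \<le> t2 \<Longrightarrow> t2 \<le> 1 \<Longrightarrow> 0 \<le> E s1 s2 t1 t2"
  proof (rule pl_nonneg[where lo = t1 and hi = 1, OF p4])
    assume h: "0 \<le> s1" "s1 \<le> s2" "s2 \<le> 1" "0 \<le> t1" "t1 \<le> t2" "t2 \<le> 1"
    show "t1 \<le> 1" using h by auto
    show "0 \<le> E s1 s2 t1 t1" using dt h by auto
    show "0 \<le> E s1 s2 t1 1" using stC[of 7 s1 s2 t1] h xg7 by auto
    show "0 \<le> E s1 s2 t1 (xg k)" if "k \<le> 7" "t1 \<le> xg k" "xg k \<le> 1" for k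
      using stC that h by auto
    show "t1 \<le> t2" "t2 \<le> 1" using h by auto
  qed
qed

lemma grid_list: "list_all (\<lambda>k1. list_all (\<lambda>k2. list_all (\<lambda>l1. list_all (\<lambda>l2.
   0 \<le> ta k1 l1 + tb k2 l2 - ta k2 l1 - ta k1 l2 \<and>
   0 \<le> tb k1 l1 + ta k2 l2 - ta k2 l1 - ta k1 l2 \<and>
   0 \<le> tb k1 l1 + tb k2 l2 - tb k2 l1 - ta k1 l2 \<and>
   0 \<le> tb k1 l1 + tb k2 l2 - ta k2 l1 - tb k1 l2) [l1..<8]) [0..<8]) [k1..<8]) [0..<8]"
  by code_simp

lemma grid_all: assumes "k1 \<le> k2" "k2 \<le> 7" "l1 \<le> l2" "l2 \<le> 7"
  shows "0 \<le> ta k1 l1 + tb k2 l2 - ta k2 l1 - ta k1 l2 \<and>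
   0 \<le> tb k1 l1 + ta k2 l2 - ta k2 l1 - ta k1 l2 \<and>
   0 \<le> tb k1 l1 + tb k2 l2 - tb k2 l1 - ta k1 l2 \<and>
   0 \<le> tb k1 l1 + tb k2 l2 - ta k2 l1 - tb k1 l2"
proof -
  have "k1 \<in> set [0..<8]" "k2 \<in> set [k1..<8]" "l1 \<in> set [0..<8]" "l2 \<in> set [l1..<8]" using assms by auto
  then show ?thesis using grid_list unfolding list_all_iff by blast
qed

lemma gap_grid: "k \<le> 7 \<Longrightarrow> l \<le> 7 \<Longrightarrow> ta k l \<le> tb k l"
proof -
  assume "k \<le> 7" "l \<le> 7"
  then have "k \<in> set [0..<8]" "l \<in> set [0..<8]" by auto
  then show ?thesis using tab_gap unfolding list_all_iff by blast
qed

lemma cast4: "0 \<le> x + y - z - w \<Longrightarrow> 0 \<le> real_of_int x / 100 + real_of_int y / 100 - real_of_int z / 100 - real_of_int w / 100"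
proof -
  assume h: "0 \<le> x + y - z - w"
  have "real_of_int x / 100 + real_of_int y / 100 - real_of_int z / 100 - real_of_int w / 100 = real_of_int (x + y - z - w) / 100"
    by (simp add: diff_divide_distrib add_divide_distrib)
  then show ?thesis using h by simp
qed

lemma gap_nonneg: assumes "0 \<le> s" "s \<le> 1" "0 \<le> t" "t \<le> 1" shows "bil ta s t \<le> bil tb s t"
proof -
  have gt: "0 \<le> bil tb s (xg l) - bil ta s (xg l)" if "l \<le> 7" "0 \<le> s" "s \<le> 1" for l s
  proof -
    have P: "pl (\<lambda>s. bil tb s (xg l) - bil ta s (xg l))" by (intro pl_diff pl_bil_s)
    have "0 \<le> (\<lambda>s. bil tb s (xg l) - bil ta s (xg l)) s"
    proof (rule pl_nonneg[OF P, where lo = 0 and hi = 1])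
      show "0 \<le> bil tb 0 (xg l) - bil ta 0 (xg l)" by (simp add: bil_0t)
      show "0 \<le> bil tb 1 (xg l) - bil ta 1 (xg l)" using bil_1t goodT_ta goodT_tb xg_range that by simp
      show "0 \<le> bil tb (xg k) (xg l) - bil ta (xg k) (xg l)" if "k \<le> 7" "0 \<le> xg k" "xg k \<le> 1" for k
        using bil_grid_good[OF goodT_ta, of k l] bil_grid_good[OF goodT_tb, of k l] gap_grid[of k l] that \<open>l \<le> 7\<close> by (simp add: divide_right_mono)
    qed (use that in auto)
    then show ?thesis by simp
  qed
  have P: "pl (\<lambda>t. bil tb s t - bil ta s t)" by (intro pl_diff pl_bil_t)
  have "0 \<le> (\<lambda>t. bil tb s t - bil ta s t) t"
  proof (rule pl_nonneg[OF P, where lo = 0 and hi = 1])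
    show "0 \<le> bil tb s 0 - bil ta s 0" by (simp add: bil_s0)
    show "0 \<le> bil tb s 1 - bil ta s 1" using bil_s1 goodT_ta goodT_tb assms by simp
    show "0 \<le> bil tb s (xg k) - bil ta s (xg k)" if "k \<le> 7" "0 \<le> xg k" "xg k \<le> 1" for k
      using gt that assms by auto
  qed (use assms in auto)
  then show ?thesis by simp
qed


lemma imp: "imprecise_copula (bil ta) (bil tb)"
proof -
  have g: "grounded (bil ta)" "grounded (bil tb)" unfolding grounded_def by (auto simp: bil_s0 bil_0t)
  have n: "neutral_one (bil ta)" "neutral_one (bil tb)" unfolding neutral_one_def
    using bil_s1 bil_1t goodT_ta goodT_tb by auto
  let ?A = "bil ta" and ?B = "bil tb"
  have gg: "\<And>k1 k2 l1 l2. k1 \<le> k2 \<Longrightarrow> k2 \<le> 7 \<Longrightarrow> l1 \<le> l2 \<Longrightarrow> l2 \<le> 7 \<Longrightarrow>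
      ?A (xg k1) (xg l1) = real_of_int (ta k1 l1) / 100 \<and> ?A (xg k2) (xg l2) = real_of_int (ta k2 l2) / 100 \<and>
      ?A (xg k2) (xg l1) = real_of_int (ta k2 l1) / 100 \<and> ?A (xg k1) (xg l2) = real_of_int (ta k1 l2) / 100 \<and>
      ?B (xg k1) (xg l1) = real_of_int (tb k1 l1) / 100 \<and> ?B (xg k2) (xg l2) = real_of_int (tb k2 l2) / 100 \<and>
      ?B (xg k2) (xg l1) = real_of_int (tb k2 l1) / 100 \<and> ?B (xg k1) (xg l2) = real_of_int (tb k1 l2) / 100"
    using bil_grid_good goodT_ta goodT_tb by simp
  have c1: "0 \<le> ?A s1 t1 + ?B s2 t2 - ?A s2 t1 - ?A s1 t2"
    if "0 \<le> s1" "s1 \<le> s2" "s2 \<le> 1" "0 \<le> t1" "t1 \<le> t2" "t2 \<le> 1" for s1 s2 t1 t2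
  proof (rule reduce4[where E = "\<lambda>s1 s2 t1 t2. ?A s1 t1 + ?B s2 t2 - ?A s2 t1 - ?A s1 t2", OF _ _ _ _ _ _ _ that])
    show "0 \<le> ?A s t1 + ?B s t2 - ?A s t1 - ?A s t2" if "0 \<le> s" "s \<le> 1" "0 \<le> t1" "t1 \<le> t2" "t2 \<le> 1" for s t1 t2
      using gap_nonneg[of s t1] gap_nonneg[of s t2] that by simp
    show "0 \<le> ?A s1 t + ?B s2 t - ?A s2 t - ?A s1 t" if "0 \<le> s1" "s1 \<le> s2" "s2 \<le> 1" "0 \<le> t" "t \<le> 1" for s1 s2 t
      using gap_nonneg[of s1 t] gap_nonneg[of s2 t] that by simp
    show "0 \<le> ?A (xg k1) (xg l1) + ?B (xg k2) (xg l2) - ?A (xg k2) (xg l1) - ?A (xg k1) (xg l2)"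
      if "k1 \<le> k2" "k2 \<le> 7" "l1 \<le> l2" "l2 \<le> 7" for k1 k2 l1 l2
      using gg[OF that] grid_all[OF that] cast4 by simp
  qed (intro pl_add pl_diff pl_const pl_bil_s pl_bil_t)+
  have c2: "0 \<le> ?B s1 t1 + ?A s2 t2 - ?A s2 t1 - ?A s1 t2"
    if "0 \<le> s1" "s1 \<le> s2" "s2 \<le> 1" "0 \<le> t1" "t1 \<le> t2" "t2 \<le> 1" for s1 s2 t1 t2
  proof (rule reduce4[where E = "\<lambda>s1 s2 t1 t2. ?B s1 t1 + ?A s2 t2 - ?A s2 t1 - ?A s1 t2", OF _ _ _ _ _ _ _ that])
    show "0 \<le> ?B s t1 + ?A s t2 - ?A s t1 - ?A s t2" if "0 \<le> s" "s \<le> 1" "0 \<le> t1" "t1 \<le> t2" "t2 \<le> 1" for s t1 t2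
      using gap_nonneg[of s t1] gap_nonneg[of s t2] that by simp
    show "0 \<le> ?B s1 t + ?A s2 t - ?A s2 t - ?A s1 t" if "0 \<le> s1" "s1 \<le> s2" "s2 \<le> 1" "0 \<le> t" "t \<le> 1" for s1 s2 t
      using gap_nonneg[of s1 t] gap_nonneg[of s2 t] that by simp
    show "0 \<le> ?B (xg k1) (xg l1) + ?A (xg k2) (xg l2) - ?A (xg k2) (xg l1) - ?A (xg k1) (xg l2)"
      if "k1 \<le> k2" "k2 \<le> 7" "l1 \<le> l2" "l2 \<le> 7" for k1 k2 l1 l2
      using gg[OF that] grid_all[OF that] cast4 by simp
  qed (intro pl_add pl_diff pl_const pl_bil_s pl_bil_t)+
  have c3: "0 \<le> ?B s1 t1 + ?B s2 t2 - ?B s2 t1 - ?A s1 t2"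
    if "0 \<le> s1" "s1 \<le> s2" "s2 \<le> 1" "0 \<le> t1" "t1 \<le> t2" "t2 \<le> 1" for s1 s2 t1 t2
  proof (rule reduce4[where E = "\<lambda>s1 s2 t1 t2. ?B s1 t1 + ?B s2 t2 - ?B s2 t1 - ?A s1 t2", OF _ _ _ _ _ _ _ that])
    show "0 \<le> ?B s t1 + ?B s t2 - ?B s t1 - ?A s t2" if "0 \<le> s" "s \<le> 1" "0 \<le> t1" "t1 \<le> t2" "t2 \<le> 1" for s t1 t2
      using gap_nonneg[of s t1] gap_nonneg[of s t2] that by simp
    show "0 \<le> ?B s1 t + ?B s2 t - ?B s2 t - ?A s1 t" if "0 \<le> s1" "s1 \<le> s2" "s2 \<le> 1" "0 \<le> t" "t \<le> 1" for s1 s2 t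
      using gap_nonneg[of s1 t] gap_nonneg[of s2 t] that by simp
    show "0 \<le> ?B (xg k1) (xg l1) + ?B (xg k2) (xg l2) - ?B (xg k2) (xg l1) - ?A (xg k1) (xg l2)"
      if "k1 \<le> k2" "k2 \<le> 7" "l1 \<le> l2" "l2 \<le> 7" for k1 k2 l1 l2
      using gg[OF that] grid_all[OF that] cast4 by simp
  qed (intro pl_add pl_diff pl_const pl_bil_s pl_bil_t)+
  have c4: "0 \<le> ?B s1 t1 + ?B s2 t2 - ?A s2 t1 - ?B s1 t2"
    if "0 \<le> s1" "s1 \<le> s2" "s2 \<le> 1" "0 \<le> t1" "t1 \<le> t2" "t2 \<le> 1" for s1 s2 t1 t2
  proof (rule reduce4[where E = "\<lambda>s1 s2 t1 t2. ?B s1 t1 + ?B s2 t2 - ?A s2 t1 - ?B s1 t2", OF _ _ _ _ _ _ _ that])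
    show "0 \<le> ?B s t1 + ?B s t2 - ?A s t1 - ?B s t2" if "0 \<le> s" "s \<le> 1" "0 \<le> t1" "t1 \<le> t2" "t2 \<le> 1" for s t1 t2
      using gap_nonneg[of s t1] gap_nonneg[of s t2] that by simp
    show "0 \<le> ?B s1 t + ?B s2 t - ?A s2 t - ?B s1 t" if "0 \<le> s1" "s1 \<le> s2" "s2 \<le> 1" "0 \<le> t" "t \<le> 1" for s1 s2 t
      using gap_nonneg[of s1 t] gap_nonneg[of s2 t] that by simp
    show "0 \<le> ?B (xg k1) (xg l1) + ?B (xg k2) (xg l2) - ?A (xg k2) (xg l1) - ?B (xg k1) (xg l2)"
      if "k1 \<le> k2" "k2 \<le> 7" "l1 \<le> l2" "l2 \<le> 7" for k1 k2 l1 l2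
      using gg[OF that] grid_all[OF that] cast4 by simp
  qed (intro pl_add pl_diff pl_const pl_bil_s pl_bil_t)+
  have all: "\<forall>(s1::real) (s2::real) (t1::real) (t2::real). 0 \<le> s1 \<and> s1 \<le> s2 \<and> s2 \<le> 1 \<and> 0 \<le> t1 \<and> t1 \<le> t2 \<and> t2 \<le> 1 \<longrightarrow>
        ?A s1 t1 + ?B s2 t2 - ?A s2 t1 - ?A s1 t2 \<ge> 0 \<and>
        ?B s1 t1 + ?A s2 t2 - ?A s2 t1 - ?A s1 t2 \<ge> 0 \<and>
        ?B s1 t1 + ?B s2 t2 - ?B s2 t1 - ?A s1 t2 \<ge> 0 \<and>
        ?B s1 t1 + ?B s2 t2 - ?A s2 t1 - ?B s1 t2 \<ge> 0"
  proof (intro allI impI)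
    fix s1 s2 t1 t2 :: real assume h: "0 \<le> s1 \<and> s1 \<le> s2 \<and> s2 \<le> 1 \<and> 0 \<le> t1 \<and> t1 \<le> t2 \<and> t2 \<le> 1"
    then show "?A s1 t1 + ?B s2 t2 - ?A s2 t1 - ?A s1 t2 \<ge> 0 \<and>
        ?B s1 t1 + ?A s2 t2 - ?A s2 t1 - ?A s1 t2 \<ge> 0 \<and>
        ?B s1 t1 + ?B s2 t2 - ?B s2 t1 - ?A s1 t2 \<ge> 0 \<and>
        ?B s1 t1 + ?B s2 t2 - ?A s2 t1 - ?B s1 t2 \<ge> 0"
      using c1[of s1 s2 t1 t2] c2[of s1 s2 t1 t2] c3[of s1 s2 t1 t2] c4[of s1 s2 t1 t2] by simp
  qed
  show ?thesis unfolding imprecise_copula_def using g n all by (intro conjI) assumption+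
qed

lemma cell: assumes cop: "copula C" and ii: "i' = Suc i" and jj: "j' = Suc j" and "i < 7" "j < 7"
  shows "0 \<le> C (xg i) (xg j) + C (xg i') (xg j') - C (xg i') (xg j) - C (xg i) (xg j')"
proof -
  have h: "0 \<le> xg i" "xg i \<le> xg i'" "xg i' \<le> 1" "0 \<le> xg j" "xg j \<le> xg j'" "xg j' \<le> 1"
    using xg_range[of i] xg_range[of i'] xg_range[of j] xg_range[of j'] xg_step[of i] xg_step[of j] assms by auto
  have "\<forall>s1 s2 t1 t2. 0 \<le> s1 \<and> s1 \<le> s2 \<and> s2 \<le> 1 \<and> 0 \<le> t1 \<and> t1 \<le> t2 \<and> t2 \<le> 1 \<longrightarrow>
        C s1 t1 + C s2 t2 - C s2 t1 - C s1 t2 \<ge> 0" using cop unfolding copula_def by blast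
  then show ?thesis using h by blast
qed

theorem mainTheorem16:
  shows "\<exists>A B. imprecise_copula A B \<and>
           \<not> (\<exists>C. copula C \<and> (\<forall>x\<in>{0..1}. \<forall>y\<in>{0..1}. A x y \<le> C x y \<and> C x y \<le> B x y))"
proof -
  have "\<not> (\<exists>C. copula C \<and> (\<forall>x\<in>{0..1}. \<forall>y\<in>{0..1}. bil ta x y \<le> C x y \<and> C x y \<le> bil tb x y))"
  proof
    assume "\<exists>C. copula C \<and> (\<forall>x\<in>{0..1}. \<forall>y\<in>{0..1}. bil ta x y \<le> C x y \<and> C x y \<le> bil tb x y)"
    then obtain C where cop: "copula C" and bd: "\<forall>x\<in>{0..1}. \<forall>y\<in>{0..1}. bil ta x y \<le> C x y \<and> C x y \<le> bil tb x y"
      by blast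
    have bnd: "\<And>k l. k \<le> 7 \<Longrightarrow> l \<le> 7 \<Longrightarrow> bil ta (xg k) (xg l) \<le> C (xg k) (xg l) \<and> C (xg k) (xg l) \<le> bil tb (xg k) (xg l)"
    proof -
      fix k l :: nat assume "k \<le> 7" "l \<le> 7"
      then have "xg k \<in> {0..1}" "xg l \<in> {0..1}" using xg_range by auto
      then show "bil ta (xg k) (xg l) \<le> C (xg k) (xg l) \<and> C (xg k) (xg l) \<le> bil tb (xg k) (xg l)"
        using bd by blast
    qed
  have c1_1: "0 \<le> C (xg 1) (xg 1) + C (xg 2) (xg 2) - C (xg 2) (xg 1) - C (xg 1) (xg 2)" by (rule cell[OF cop]) simp_all
  have c1_2: "0 \<le> C (xg 1) (xg 2) + C (xg 2) (xg 3) - C (xg 2) (xg 2) - C (xg 1) (xg 3)" by (rule cell[OF cop]) simp_all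
  have c1_3: "0 \<le> C (xg 1) (xg 3) + C (xg 2) (xg 4) - C (xg 2) (xg 3) - C (xg 1) (xg 4)" by (rule cell[OF cop]) simp_all
  have c1_4: "0 \<le> C (xg 1) (xg 4) + C (xg 2) (xg 5) - C (xg 2) (xg 4) - C (xg 1) (xg 5)" by (rule cell[OF cop]) simp_all
  have c1_5: "0 \<le> C (xg 1) (xg 5) + C (xg 2) (xg 6) - C (xg 2) (xg 5) - C (xg 1) (xg 6)" by (rule cell[OF cop]) simp_all
  have c2_1: "0 \<le> C (xg 2) (xg 1) + C (xg 3) (xg 2) - C (xg 3) (xg 1) - C (xg 2) (xg 2)" by (rule cell[OF cop]) simp_all
  have c2_3: "0 \<le> C (xg 2) (xg 3) + C (xg 3) (xg 4) - C (xg 3) (xg 3) - C (xg 2) (xg 4)" by (rule cell[OF cop]) simp_all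
  have c2_4: "0 \<le> C (xg 2) (xg 4) + C (xg 3) (xg 5) - C (xg 3) (xg 4) - C (xg 2) (xg 5)" by (rule cell[OF cop]) simp_all
  have c2_5: "0 \<le> C (xg 2) (xg 5) + C (xg 3) (xg 6) - C (xg 3) (xg 5) - C (xg 2) (xg 6)" by (rule cell[OF cop]) simp_all
  have c3_1: "0 \<le> C (xg 3) (xg 1) + C (xg 4) (xg 2) - C (xg 4) (xg 1) - C (xg 3) (xg 2)" by (rule cell[OF cop]) simp_all
  have c3_2: "0 \<le> C (xg 3) (xg 2) + C (xg 4) (xg 3) - C (xg 4) (xg 2) - C (xg 3) (xg 3)" by (rule cell[OF cop]) simp_all
  have c3_3: "0 \<le> C (xg 3) (xg 3) + C (xg 4) (xg 4) - C (xg 4) (xg 3) - C (xg 3) (xg 4)" by (rule cell[OF cop]) simp_all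
  have c3_4: "0 \<le> C (xg 3) (xg 4) + C (xg 4) (xg 5) - C (xg 4) (xg 4) - C (xg 3) (xg 5)" by (rule cell[OF cop]) simp_all
  have c3_5: "0 \<le> C (xg 3) (xg 5) + C (xg 4) (xg 6) - C (xg 4) (xg 5) - C (xg 3) (xg 6)" by (rule cell[OF cop]) simp_all
  have c4_1: "0 \<le> C (xg 4) (xg 1) + C (xg 5) (xg 2) - C (xg 5) (xg 1) - C (xg 4) (xg 2)" by (rule cell[OF cop]) simp_all
  have c4_2: "0 \<le> C (xg 4) (xg 2) + C (xg 5) (xg 3) - C (xg 5) (xg 2) - C (xg 4) (xg 3)" by (rule cell[OF cop]) simp_all
  have c4_3: "0 \<le> C (xg 4) (xg 3) + C (xg 5) (xg 4) - C (xg 5) (xg 3) - C (xg 4) (xg 4)" by (rule cell[OF cop]) simp_all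
  have c4_5: "0 \<le> C (xg 4) (xg 5) + C (xg 5) (xg 6) - C (xg 5) (xg 5) - C (xg 4) (xg 6)" by (rule cell[OF cop]) simp_all
  have c5_1: "0 \<le> C (xg 5) (xg 1) + C (xg 6) (xg 2) - C (xg 6) (xg 1) - C (xg 5) (xg 2)" by (rule cell[OF cop]) simp_all
  have c5_2: "0 \<le> C (xg 5) (xg 2) + C (xg 6) (xg 3) - C (xg 6) (xg 2) - C (xg 5) (xg 3)" by (rule cell[OF cop]) simp_all
  have c5_3: "0 \<le> C (xg 5) (xg 3) + C (xg 6) (xg 4) - C (xg 6) (xg 3) - C (xg 5) (xg 4)" by (rule cell[OF cop]) simp_all
  have c5_4: "0 \<le> C (xg 5) (xg 4) + C (xg 6) (xg 5) - C (xg 6) (xg 4) - C (xg 5) (xg 5)" by (rule cell[OF cop]) simp_all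
  have c5_5: "0 \<le> C (xg 5) (xg 5) + C (xg 6) (xg 6) - C (xg 6) (xg 5) - C (xg 5) (xg 6)" by (rule cell[OF cop]) simp_all
  have b1_1: "C (xg 1) (xg 1) \<le> bil tb (xg 1) (xg 1)" using bnd[of 1 1] by simp
  have b2_3: "C (xg 2) (xg 3) \<le> bil tb (xg 2) (xg 3)" using bnd[of 2 3] by simp
  have b3_2: "C (xg 3) (xg 2) \<le> bil tb (xg 3) (xg 2)" using bnd[of 3 2] by simp
  have b4_5: "C (xg 4) (xg 5) \<le> bil tb (xg 4) (xg 5)" using bnd[of 4 5] by simp
  have b5_4: "C (xg 5) (xg 4) \<le> bil tb (xg 5) (xg 4)" using bnd[of 5 4] by simp
  have b6_6: "C (xg 6) (xg 6) \<le> bil tb (xg 6) (xg 6)" using bnd[of 6 6] by simp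
  have a1_6: "bil ta (xg 1) (xg 6) \<le> C (xg 1) (xg 6)" using bnd[of 1 6] by simp
  have a2_2: "bil ta (xg 2) (xg 2) \<le> C (xg 2) (xg 2)" using bnd[of 2 2] by simp
  have a3_3: "bil ta (xg 3) (xg 3) \<le> C (xg 3) (xg 3)" using bnd[of 3 3] by simp
  have a4_4: "bil ta (xg 4) (xg 4) \<le> C (xg 4) (xg 4)" using bnd[of 4 4] by simp
  have a5_5: "bil ta (xg 5) (xg 5) \<le> C (xg 5) (xg 5)" using bnd[of 5 5] by simp
  have a6_1: "bil ta (xg 6) (xg 1) \<le> C (xg 6) (xg 1)" using bnd[of 6 1] by simp
  have vtb1_1: "bil tb (xg 1) (xg 1) = 1 / 100" by (simp add: bil_grid_good goodT_ta goodT_tb ta_def tb_def TA_def TB_def)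
  have vtb2_3: "bil tb (xg 2) (xg 3) = 3 / 100" by (simp add: bil_grid_good goodT_ta goodT_tb ta_def tb_def TA_def TB_def)
  have vtb3_2: "bil tb (xg 3) (xg 2) = 2 / 100" by (simp add: bil_grid_good goodT_ta goodT_tb ta_def tb_def TA_def TB_def)
  have vtb4_5: "bil tb (xg 4) (xg 5) = 5 / 100" by (simp add: bil_grid_good goodT_ta goodT_tb ta_def tb_def TA_def TB_def)
  have vtb5_4: "bil tb (xg 5) (xg 4) = 6 / 100" by (simp add: bil_grid_good goodT_ta goodT_tb ta_def tb_def TA_def TB_def)
  have vtb6_6: "bil tb (xg 6) (xg 6) = 8 / 100" by (simp add: bil_grid_good goodT_ta goodT_tb ta_def tb_def TA_def TB_def)
  have vta1_6: "bil ta (xg 1) (xg 6) = 4 / 100" by (simp add: bil_grid_good goodT_ta goodT_tb ta_def tb_def TA_def TB_def)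
  have vta2_2: "bil ta (xg 2) (xg 2) = 2 / 100" by (simp add: bil_grid_good goodT_ta goodT_tb ta_def tb_def TA_def TB_def)
  have vta3_3: "bil ta (xg 3) (xg 3) = 4 / 100" by (simp add: bil_grid_good goodT_ta goodT_tb ta_def tb_def TA_def TB_def)
  have vta4_4: "bil ta (xg 4) (xg 4) = 5 / 100" by (simp add: bil_grid_good goodT_ta goodT_tb ta_def tb_def TA_def TB_def)
  have vta5_5: "bil ta (xg 5) (xg 5) = 7 / 100" by (simp add: bil_grid_good goodT_ta goodT_tb ta_def tb_def TA_def TB_def)
  have vta6_1: "bil ta (xg 6) (xg 1) = 4 / 100" by (simp add: bil_grid_good goodT_ta goodT_tb ta_def tb_def TA_def TB_def)
    show False using c1_1 c1_2 c1_3 c1_4 c1_5 c2_1 c2_3 c2_4 c2_5 c3_1 c3_2 c3_3 c3_4 c3_5 c4_1 c4_2 c4_3 c4_5 c5_1 c5_2 c5_3 c5_4 c5_5 b1_1 b2_3 b3_2 b4_5 b5_4 b6_6 a1_6 a2_2 a3_3 a4_4 a5_5 a6_1 vtb1_1 vtb2_3 vtb3_2 vtb4_5 vtb5_4 vtb6_6 vta1_6 vta2_2 vta3_3 vta4_4 vta5_5 vta6_1 by linarith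
  qed
  then show ?thesis using imp by blast
qed

end
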